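(* Let $M,N$ be equivalent canonical dtlas such that $M$ is a dtpla with $P_M=\{\hat p_1,\dots,\hat p_n\}$ and $N$ is a dtop. Let $\varphi$ be the aheadness mapping from $N$ to $M$ and define $\psi(q)=(\varphi(q,\hat p_1),\dots,\varphi(q,\hat p_n))$ for $q\in Q_N$. Then $\psi$ is a bijection between $Q_N$ and $\mathrm{diftup}(M)$.
   Context: Trees and patterns. $T_\Delta(Z)$ is the set of trees over ranked alphabet $\Delta$ with extra nullary symbols $Z$; $t/v$ is the subtree at node $v\in\mathbb N_+^*$; $\bot$ is a special nullary symbol; $V_\bot(t)$ is the set of nodes of $t$ labelled $\bot$. For trees, $t\sqsubseteq t'$ means $t'$ is obtained from $t$ by replacing some occurrences of $\bot$ by trees; $\sqcap T$ is the greatest lower bound of a finite nonempty set $T$ of trees (largest common prefix with $\bot$ at the highest nodes of disagreement). A $\Sigma$-context is $C\in T_\Sigma(\{\bot\})$ with exactly one occurrence of $\bot$; $\mathcal C_\Sigma$ is their set; $C[t]$ replaces $\bot$ by $t$. Dtlas. A dtla $M$ from $\Sigma$ to $\Delta$ consists of a finite set $Q_M$ of states, a total deterministic bottom-up tree automaton with finite state set $P_M$ and transitions $\delta(a,p_1,\dots,p_k)$, extended to $\delta_M:T_\Sigma\to P_M$ ($[\![p]\!]_M=\delta_M^{-1}(p)$), axioms $A_M(p)\in T_\Delta(Q_M(\{x_0\}))$, and at most one rule $q(a(x_1\langle p_1\rangle,\dots,x_k\langle p_k\rangle))\to\mathrm{rhs}_M(q,a,p_1,\dots,p_k)\in T_\Delta(Q_M(X_k))$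 per $q,a,p_1,\dots,p_k$. Semantics: $q_M(a(s_1,\dots,s_k))=\mathrm{rhs}_M(q,a,\delta_M(s_1),\dots,\delta_M(s_k))[q'(x_i)\leftarrow q'_M(s_i)]$, $M(s)=A_M(\delta_M(s))[q(x_0)\leftarrow q_M(s)]$; two dtlas are equivalent if $[\![M]\!]=[\![N]\!]$. Total: $[\![M]\!]$ total. A dtop is a dtla with a single look-ahead state $\bot$. A dtpla is a dtla with $|P_M|\ge2$. $M(C[p])\in T_\Delta(Q_M\times P_M)$ is the output on $C\in\mathcal C_\Sigma$ with the hole treated as a leaf of look-ahead state $p$ and $q_M(p)=\langle q,p\rangle$; for a dtop $N$, $N(C)=N(C[\bot])$. A state $q$ is reachable if $\langle q,p\rangle$ labels a node of $M(C[p])$ for some $C,p$. $M$ is la-uniform if there is $\rho_M:Q_M\to P_M$ with domain of $[\![q]\!]_M$ equal to $[\![\rho_M(q)]\!]_M$, every $q(x_0)$ in $A_M(p)$ having $\rho_M(q)=p$, every $q'(x_i)$ in $\mathrm{rhs}_M(q,a,p_1,\dots,p_k)$ having $\rho_M(q')=p_i$, and the rule for $q,a,p_1,\dots,p_k$ existing iff $\delta(a,p_1,\dots,p_k)=\rho_M(q)$. Earliest: no state $q$ and $d\in\Delta$ such that $q(s)$ has root label $d$ for all $s$ in the domain of $[\![q]\!]$. Canonical: total, la-uniform, earliest, all states reachable, and distinct states have distinct translations. $\mathrm{pref}(M,C)=\sqcap\{M(C[\hat p_1]),\dots,M(C[\hat p_n])\}$ and $\mathrm{diftup}(M)=\{(M(C[\hat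 p_1])/v,\dots,M(C[\hat p_n])/v)\mid C\in\mathcal C_\Sigma,\ v\in V_\bot(\mathrm{pref}(M,C))\}$. Aheadness mapping: the unique $\varphi:Q_N\times P_M\to T_\Delta(Q_M\times P_M)$ with $M(C[p])=N(C)[\langle q,\bot\rangle\leftarrow\varphi(q,p)\mid q\in Q_N]$ for all $C\in\mathcal C_\Sigma$, $p\in P_M$. *)

theory Defs
  imports Main
begin

text \<open>Labels: a symbol of a ranked alphabet, an extra nullary symbol from a set Z, or the
  special nullary symbol bottom.\<close>
datatype ('d, 'z) sym = Sym 'd | Var 'z | Bot

datatype 'l tree = Node 'l "'l tree list"

fun root :: "'l tree \<Rightarrow> 'l" where
  "root (Node l ts) = l"

fun in_T :: "('d \<Rightarrow> nat) \<Rightarrow> 'd set \<Rightarrow> 'z set \<Rightarrow> ('d, 'z) sym tree \<Rightarrow> bool" where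
  "in_T rk D Z (Node (Sym d) ts) = (d \<in> D \<and> length ts = rk d \<and> (\<forall>t\<in>set ts. in_T rk D Z t))"
| "in_T rk D Z (Node (Var z) ts) = (z \<in> Z \<and> ts = [])"
| "in_T rk D Z (Node Bot ts) = False"

fun in_Tb :: "('d \<Rightarrow> nat) \<Rightarrow> 'd set \<Rightarrow> 'z set \<Rightarrow> ('d, 'z) sym tree \<Rightarrow> bool" where
  "in_Tb rk D Z (Node (Sym d) ts) = (d \<in> D \<and> length ts = rk d \<and> (\<forall>t\<in>set ts. in_Tb rk D Z t))"
| "in_Tb rk D Z (Node (Var z) ts) = (z \<in> Z \<and> ts = [])"
| "in_Tb rk D Z (Node Bot ts) = (ts = [])"

text \<open>Subtree at a node (nodes are lists of 0-based child indices).\<close>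
fun subt :: "'l tree \<Rightarrow> nat list \<Rightarrow> 'l tree option" where
  "subt t [] = Some t"
| "subt (Node l ts) (i # v) = (if i < length ts then subt (ts ! i) v else None)"

definition botpos :: "('d, 'z) sym tree \<Rightarrow> nat list set" where
  "botpos t = {v. map_option root (subt t v) = Some Bot}"

definition is_context :: "('a \<Rightarrow> nat) \<Rightarrow> 'a set \<Rightarrow> ('a, unit) sym tree \<Rightarrow> bool" where
  "is_context rk S C \<longleftrightarrow> in_Tb rk S {} C \<and> card (botpos C) = 1"

text \<open>Greatest lower bound w.r.t. the prefix order (largest common prefix, bottom at the
  highest nodes of disagreement).\<close>
function glb :: "('d, 'z) sym tree \<Rightarrow> ('d, 'z) sym tree \<Rightarrow> ('d, 'z) sym tree" where
  "glb (Node l ts) (Node l' ts') =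
     (if l = l' \<and> length ts = length ts'
      then Node l (map (\<lambda>i. glb (ts ! i) (ts' ! i)) [0..<length ts])
      else Node Bot [])"
  by pat_completeness auto
termination
  proof (relation "measure (\<lambda>(t, t'). size t)", goal_cases)
  case 1 then show ?case by simp
next
  case (2 l ts l' ts' i)
  then have "ts ! i \<in> set ts" by simp
  then have "size (ts ! i) \<le> size_list size ts" by (rule size_list_estimation') simp
  then show ?case by simp
qed

fun glb_list :: "('d, 'z) sym tree list \<Rightarrow> ('d, 'z) sym tree" where
  "glb_list [] = Node Bot []"
| "glb_list (t # ts) = fold glb ts t"

fun tsubst :: "('d, 'z) sym tree \<Rightarrow> ('z \<Rightarrow> ('d, 'w) sym tree) \<Rightarrow> ('d, 'w) sym tree" where
  "tsubst (Node (Sym d) ts) f = Node (Sym d) (map (\<lambda>t. tsubst t f) ts)"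
| "tsubst (Node (Var z) ts) f = f z"
| "tsubst (Node Bot ts) f = Node Bot []"

fun osubst :: "('d, 'z) sym tree \<Rightarrow> ('z \<Rightarrow> ('d, 'w) sym tree option) \<Rightarrow> ('d, 'w) sym tree option" where
  "osubst (Node (Sym d) ts) f = map_option (Node (Sym d)) (those (map (\<lambda>t. osubst t f) ts))"
| "osubst (Node (Var z) ts) f = f z"
| "osubst (Node Bot ts) f = Some (Node Bot [])"

text \<open>A dtla from Sigma to Delta: states Q, look-ahead states P, transition function delta of
  the bottom-up look-ahead automaton, axioms A(p) (leaves Var q stand for q(x0)), and partial
  rules rhs q a [p1,...,pk] (leaves Var (q', i) stand for q'(x_i), 1 \<le> i \<le> k).\<close>
record ('a, 'd, 'q, 'p) dtla =
  states :: "'q set"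
  lastates :: "'p set"
  delta :: "'a \<Rightarrow> 'p list \<Rightarrow> 'p"
  axiom :: "'p \<Rightarrow> ('d, 'q) sym tree"
  rhs :: "'q \<Rightarrow> 'a \<Rightarrow> 'p list \<Rightarrow> ('d, 'q \<times> nat) sym tree option"

definition is_dtla ::
  "('a \<Rightarrow> nat) \<Rightarrow> 'a set \<Rightarrow> ('d \<Rightarrow> nat) \<Rightarrow> 'd set \<Rightarrow> ('a, 'd, 'q, 'p) dtla \<Rightarrow> bool" where
  "is_dtla rkS S rkD D M \<longleftrightarrow>
     finite (states M) \<and> finite (lastates M) \<and> lastates M \<noteq> {} \<and>
     (\<forall>a\<in>S. \<forall>ps. length ps = rkS a \<and> set ps \<subseteq> lastates M \<longrightarrow> delta M a ps \<in> lastates M) \<and>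
     (\<forall>p\<in>lastates M. in_T rkD D (states M) (axiom M p)) \<and>
     (\<forall>q a ps r. rhs M q a ps = Some r \<longrightarrow>
        q \<in> states M \<and> a \<in> S \<and> length ps = rkS a \<and> set ps \<subseteq> lastates M \<and>
        in_T rkD D (states M \<times> {1..rkS a}) r)"

fun run :: "('a, 'd, 'q, 'p) dtla \<Rightarrow> 'p \<Rightarrow> ('a, unit) sym tree \<Rightarrow> 'p" where
  "run M p (Node (Sym a) ts) = delta M a (map (run M p) ts)"
| "run M p (Node (Var z) ts) = p"
| "run M p (Node Bot ts) = p"

fun qrun :: "('a, 'd, 'q, 'p) dtla \<Rightarrow> 'p \<Rightarrow> ('q \<Rightarrow> ('d, 'w) sym tree option)
             \<Rightarrow> ('a, unit) sym tree \<Rightarrow> 'q \<Rightarrow> ('d, 'w) sym tree option" where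
  "qrun M p h (Node (Sym a) ts) =
     (let rs = map (qrun M p h) ts; ps = map (run M p) ts in
      (\<lambda>q. case rhs M q a ps of
             None \<Rightarrow> None
           | Some r \<Rightarrow> osubst r (\<lambda>(q', i). if 0 < i \<and> i \<le> length ts then (rs ! (i - 1)) q' else None)))"
| "qrun M p h (Node (Var z) ts) = (\<lambda>q. None)"
| "qrun M p h (Node Bot ts) = h"

definition qsem :: "('a, 'd, 'q, 'p) dtla \<Rightarrow> 'q \<Rightarrow> ('a, unit) sym tree \<Rightarrow> ('d, unit) sym tree option" where
  "qsem M q s = qrun M undefined (\<lambda>_. None) s q"

definition msem :: "('a, 'd, 'q, 'p) dtla \<Rightarrow> ('a, unit) sym tree \<Rightarrow> ('d, unit) sym tree option" where
  "msem M s = osubst (axiom M (run M undefined s)) (\<lambda>q. qsem M q s)"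

text \<open>Output on a context with the hole treated as a leaf of look-ahead state p, where
  q_M(p) = <q,p>: this is M(C[p]).\<close>
definition cout :: "('a, 'd, 'q, 'p) dtla \<Rightarrow> ('a, unit) sym tree \<Rightarrow> 'p \<Rightarrow> ('d, 'q \<times> 'p) sym tree option" where
  "cout M C p = osubst (axiom M (run M p C))
                   (qrun M p (\<lambda>q. Some (Node (Var (q, p)) [])) C)"

definition equivalent ::
  "('a \<Rightarrow> nat) \<Rightarrow> 'a set \<Rightarrow> ('a, 'd, 'q1, 'p1) dtla \<Rightarrow> ('a, 'd, 'q2, 'p2) dtla \<Rightarrow> bool" where
  "equivalent rkS S M N \<longleftrightarrow> (\<forall>s. in_T rkS S {} s \<longrightarrow> msem M s = msem N s)"

definition total :: "('a \<Rightarrow> nat) \<Rightarrow> 'a set \<Rightarrow> ('a, 'd, 'q, 'p) dtla \<Rightarrow> bool" where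
  "total rkS S M \<longleftrightarrow> (\<forall>s. in_T rkS S {} s \<longrightarrow> msem M s \<noteq> None)"

definition la_uniform :: "('a \<Rightarrow> nat) \<Rightarrow> 'a set \<Rightarrow> ('a, 'd, 'q, 'p) dtla \<Rightarrow> bool" where
  "la_uniform rkS S M \<longleftrightarrow> (\<exists>\<rho>. (\<forall>q\<in>states M. \<rho> q \<in> lastates M) \<and>
     (\<forall>q\<in>states M. \<forall>s. in_T rkS S {} s \<longrightarrow> (qsem M q s \<noteq> None \<longleftrightarrow> run M undefined s = \<rho> q)) \<and>
     (\<forall>p\<in>lastates M. \<forall>q. Var q \<in> set_tree (axiom M p) \<longrightarrow> \<rho> q = p) \<and>
     (\<forall>q a ps r q' i. rhs M q a ps = Some r \<and> Var (q', i) \<in> set_tree r \<longrightarrow> \<rho> q' = ps ! (i - 1)) \<and>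
     (\<forall>q\<in>states M. \<forall>a\<in>S. \<forall>ps. length ps = rkS a \<and> set ps \<subseteq> lastates M \<longrightarrow>
        (rhs M q a ps \<noteq> None \<longleftrightarrow> delta M a ps = \<rho> q)))"

definition earliest :: "('a \<Rightarrow> nat) \<Rightarrow> 'a set \<Rightarrow> 'd set \<Rightarrow> ('a, 'd, 'q, 'p) dtla \<Rightarrow> bool" where
  "earliest rkS S D M \<longleftrightarrow> \<not> (\<exists>q\<in>states M. \<exists>d\<in>D. \<forall>s. in_T rkS S {} s \<and> qsem M q s \<noteq> None \<longrightarrow>
       map_option root (qsem M q s) = Some (Sym d))"

definition reachable :: "('a \<Rightarrow> nat) \<Rightarrow> 'a set \<Rightarrow> ('a, 'd, 'q, 'p) dtla \<Rightarrow> 'q \<Rightarrow> bool" where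
  "reachable rkS S M q \<longleftrightarrow> (\<exists>C p t. is_context rkS S C \<and> p \<in> lastates M \<and>
       cout M C p = Some t \<and> Var (q, p) \<in> set_tree t)"

definition canonical ::
  "('a \<Rightarrow> nat) \<Rightarrow> 'a set \<Rightarrow> ('d \<Rightarrow> nat) \<Rightarrow> 'd set \<Rightarrow> ('a, 'd, 'q, 'p) dtla \<Rightarrow> bool" where
  "canonical rkS S rkD D M \<longleftrightarrow> total rkS S M \<and> la_uniform rkS S M \<and> earliest rkS S D M \<and>
     (\<forall>q\<in>states M. reachable rkS S M q) \<and>
     (\<forall>q\<in>states M. \<forall>q'\<in>states M. q \<noteq> q' \<longrightarrow>
        (\<exists>s. in_T rkS S {} s \<and> qsem M q s \<noteq> qsem M q' s))"

definition is_dtop :: "('a, 'd, 'q, 'p) dtla \<Rightarrow> bool" where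
  "is_dtop M \<longleftrightarrow> card (lastates M) = 1"

definition is_dtpla :: "('a, 'd, 'q, 'p) dtla \<Rightarrow> bool" where
  "is_dtpla M \<longleftrightarrow> card (lastates M) \<ge> 2"

definition diftup :: "('a \<Rightarrow> nat) \<Rightarrow> 'a set \<Rightarrow> ('a, 'd, 'q, 'p) dtla \<Rightarrow> 'p list
                      \<Rightarrow> ('d, 'q \<times> 'p) sym tree list set" where
  "diftup rkS S M ps = {map (\<lambda>t. the (subt t v)) ts | C v ts.
      is_context rkS S C \<and> those (map (cout M C) ps) = Some ts \<and> v \<in> botpos (glb_list ts)}"

definition is_aheadness ::
  "('a \<Rightarrow> nat) \<Rightarrow> 'a set \<Rightarrow> ('a, 'd, 'q1, 'p1) dtla \<Rightarrow> ('a, 'd, 'q2, 'p2) dtla \<Rightarrow> 'p2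
   \<Rightarrow> ('q2 \<Rightarrow> 'p1 \<Rightarrow> ('d, 'q1 \<times> 'p1) sym tree) \<Rightarrow> bool" where
  "is_aheadness rkS S M N pN \<phi> \<longleftrightarrow>
     (\<forall>C p. is_context rkS S C \<and> p \<in> lastates M \<longrightarrow>
        cout M C p = map_option (\<lambda>t. tsubst t (\<lambda>(q, _). \<phi> q p)) (cout N C pN))"

end

theory Submission
  imports Defs
begin

lemma those_SomeD:
  "those xs = Some ys \<Longrightarrow> length ys = length xs \<and> (\<forall>i<length xs. xs ! i = Some (ys ! i))"
proof (induction xs arbitrary: ys)
  case Nil then show ?case by simp
next
  case (Cons x xs)
  then obtain y ys' where "x = Some y" "those xs = Some ys'" "ys = y # ys'"
    by (auto split: option.splits)
  with Cons.IH[of ys'] show ?case by (auto simp: nth_Cons split: nat.splits)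
qed

lemma those_map_Some: "those (map Some ys) = Some ys"
  by (induction ys) auto

lemma those_None: "None \<in> set xs \<Longrightarrow> those xs = None"
  by (induction xs) (auto split: option.splits)

lemma those_eq: "(\<And>x. x \<in> set xs \<Longrightarrow> f x = g x) \<Longrightarrow> those (map f xs) = those (map g xs)"
  by (metis map_cong)

lemma osubst_assoc:
  "Option.bind (osubst r f) (\<lambda>t. osubst t g) = osubst r (\<lambda>z. Option.bind (f z) (\<lambda>t. osubst t g))"
proof (induction r f rule: osubst.induct)
  case (1 d ts f)
  show ?case
  proof (cases "None \<in> set (map (\<lambda>t. osubst t f) ts)")
    case True
    then obtain t where t: "t \<in> set ts" "osubst t f = None" by auto
    then have "None \<in> set (map (\<lambda>t. osubst t (\<lambda>z. Option.bind (f z) (\<lambda>t. osubst t g))) ts)"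
      using 1[OF t(1)] by force
    then show ?thesis using True by (simp add: those_None)
  next
    case False
    then have "\<forall>t\<in>set ts. \<exists>u. osubst t f = Some u" by force
    then obtain us where us: "map (\<lambda>t. osubst t f) ts = map Some us"
      by (metis (no_types, lifting) ex_map_conv option.exhaust_sel image_iff list.set_map False)
    have th: "those (map (\<lambda>t. osubst t f) ts) = Some us" by (simp add: us those_map_Some)
    have len: "length us = length ts" using us by (metis length_map)
    have e: "\<And>i. i < length ts \<Longrightarrow> osubst (ts ! i) f = Some (us ! i)"
      using us by (metis nth_map len)
    have "map (\<lambda>t. osubst t (\<lambda>z. Option.bind (f z) (\<lambda>t. osubst t g))) ts
          = map (\<lambda>u. osubst u g) us"
    proof (rule nth_equalityI)
      show "length (map (\<lambda>t. osubst t (\<lambda>z. Option.bind (f z) (\<lambda>t. osubst t g))) ts) = length (map (\<lambda>u. osubst u g) us)"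
        using len by simp
    next
      fix i assume "i < length (map (\<lambda>t. osubst t (\<lambda>z. Option.bind (f z) (\<lambda>t. osubst t g))) ts)"
      then have i: "i < length ts" by simp
      have "osubst (ts ! i) (\<lambda>z. Option.bind (f z) (\<lambda>t. osubst t g)) = Option.bind (osubst (ts!i) f) (\<lambda>t. osubst t g)"
        using 1[of "ts ! i"] i by simp
      then show "map (\<lambda>t. osubst t (\<lambda>z. Option.bind (f z) (\<lambda>t. osubst t g))) ts ! i = map (\<lambda>u. osubst u g) us ! i"
        using i len e by simp
    qed
    then show ?thesis using th by simp
  qed
qed auto


fun plug :: "('a, unit) sym tree \<Rightarrow> ('a, unit) sym tree \<Rightarrow> ('a, unit) sym tree" where
  "plug (Node (Sym a) ts) s = Node (Sym a) (map (\<lambda>t. plug t s) ts)"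
| "plug (Node (Var z) ts) s = Node (Var z) ts"
| "plug (Node Bot ts) s = s"

lemma plug_in_T: "in_Tb rk S {} C \<Longrightarrow> in_T rk S {} s \<Longrightarrow> in_T rk S {} (plug C s)"
  by (induction rk S "{}::unit set" C rule: in_Tb.induct) auto

lemma run_ground: "in_T rk S {} s \<Longrightarrow> run M p s = run M p' s"
proof (induction rk S "{}::unit set" s arbitrary: rule: in_T.induct)
  case (1 rk D d ts)
  then have "map (run M p) ts = map (run M p') ts" by auto
  then show ?case by (metis run.simps(1))
qed auto

lemma run_in:
  assumes "is_dtla rkS S rkD D M"
  shows "in_T rkS S {} s \<Longrightarrow> run M p s \<in> lastates M"
proof (induction s)
  case (Node l ts)
  show ?case
  proof (cases l)
    case (Sym d)
    with Node have "set (map (run M p) ts) \<subseteq> lastates M" "length (map (run M p) ts) = rkS d" "d \<in> S" by auto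
    then show ?thesis using assms Sym unfolding is_dtla_def by (simp del: set_map length_map)
  qed (use Node in auto)
qed

lemma run_plug: "in_Tb rk S {} C \<Longrightarrow> run M (run M p0 s) C = run M p0 (plug C s)"
proof (induction rk S "{}::unit set" C rule: in_Tb.induct)
  case (1 rk D d ts)
  then have "map (run M (run M p0 s)) ts = map (run M p0) (map (\<lambda>t. plug t s) ts)" by auto
  then show ?case by (metis run.simps(1) plug.simps(1))
qed auto

lemma qrun_plug:
  assumes "in_Tb rk S {} C"
  shows "Option.bind (qrun M (run M undefined s) (\<lambda>q. Some (Node (Var (q, run M undefined s)) [])) C q)
           (\<lambda>t. osubst t (\<lambda>(x, _). qsem M x s)) = qsem M q (plug C s)"
  using assms
proof (induction rk S "{}::unit set" C arbitrary: q rule: in_Tb.induct)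
  case (1 rk D a ts)
  let ?p = "run M undefined s"
  let ?h = "\<lambda>q. Some (Node (Var (q, ?p)) []) :: ('b, 'c \<times> 'd) sym tree option"
  let ?g = "\<lambda>t. osubst t (\<lambda>(x, _). qsem M x s)"
  have ps: "map (run M ?p) ts = map (run M undefined) (map (\<lambda>t. plug t s) ts)"
    using 1 by (auto intro!: map_cong run_plug)
  show ?case
  proof (cases "rhs M q a (map (run M ?p) ts)")
    case None
    then have "rhs M q a (map (run M undefined) (map (\<lambda>t. plug t s) ts)) = None" using ps by simp
    then have "qsem M q (plug (Node (Sym a) ts) s) = None" by (simp add: qsem_def Let_def)
    then show ?thesis using None by (simp add: Let_def)
  next
    case (Some r)
    have "Option.bind (qrun M ?p ?h (Node (Sym a) ts) q) ?g
       = osubst r (\<lambda>z. Option.bind ((\<lambda>(q', i). if 0 < i \<and> i \<le> length ts then (map (qrun M ?p ?h) ts ! (i - 1)) q' else None) z) ?g)"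
      using Some by (simp add: Let_def osubst_assoc)
    also have "\<dots> = osubst r (\<lambda>(q', i). if 0 < i \<and> i \<le> length ts then qsem M q' (plug (ts ! (i - 1)) s) else None)"
    proof -
      have "(\<lambda>z. Option.bind ((\<lambda>(q', i). if 0 < i \<and> i \<le> length ts then (map (qrun M ?p ?h) ts ! (i - 1)) q' else None) z) ?g)
         = (\<lambda>(q', i). if 0 < i \<and> i \<le> length ts then qsem M q' (plug (ts ! (i - 1)) s) else None)"
      proof
        fix z :: "'c \<times> nat"
        obtain q' i where z: "z = (q', i)" by (cases z)
        show "Option.bind ((\<lambda>(q', i). if 0 < i \<and> i \<le> length ts then (map (qrun M ?p ?h) ts ! (i - 1)) q' else None) z) ?g
           = (\<lambda>(q', i). if 0 < i \<and> i \<le> length ts then qsem M q' (plug (ts ! (i - 1)) s) else None) z"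
        proof (cases "0 < i \<and> i \<le> length ts")
          case True
          then have "ts ! (i - 1) \<in> set ts" by (intro nth_mem) linarith
          then show ?thesis using 1 True z by auto
        qed (use z in auto)
      qed
      then show ?thesis by simp
    qed
    also have "\<dots> = qsem M q (plug (Node (Sym a) ts) s)"
    proof -
      have "rhs M q a (map (run M undefined) (map (\<lambda>t. plug t s) ts)) = Some r" by (simp only: ps[symmetric] Some)
      moreover have "(\<lambda>(q', i). if 0 < i \<and> i \<le> length ts then qsem M q' (plug (ts ! (i - 1)) s) else None)
        = (\<lambda>(q', i). if 0 < i \<and> i \<le> length ts
          then (map (qrun M undefined (\<lambda>_. None)) (map (\<lambda>t. plug t s) ts) ! (i - 1)) q' else None)"
        by (auto simp: qsem_def fun_eq_iff simp del: map_map)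
      ultimately show ?thesis by (simp add: qsem_def Let_def del: map_map)
    qed
    finally show ?thesis .
  qed
qed (auto simp: qsem_def)

lemma cout_plug:
  assumes "in_Tb rk S {} C" "in_T rk S {} s"
  shows "Option.bind (cout M C (run M undefined s)) (\<lambda>t. osubst t (\<lambda>(x, _). qsem M x s)) = msem M (plug C s)"
  unfolding cout_def msem_def osubst_assoc
  by (simp add: qrun_plug[OF assms(1)] run_plug[OF assms(1)])


lemma osubst_in_T:
  "in_T rk D Z r \<Longrightarrow> (\<And>z u. z \<in> Z \<Longrightarrow> f z = Some u \<Longrightarrow> in_T rk D W u) \<Longrightarrow> osubst r f = Some t \<Longrightarrow> in_T rk D W t"
proof (induction r arbitrary: t)
  case (Node l ts)
  show ?case
  proof (cases l)
    case (Sym d)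
    with Node.prems obtain us where us: "those (map (\<lambda>t. osubst t f) ts) = Some us" "t = Node (Sym d) us"
      by auto
    from those_SomeD[OF us(1)] have len: "length us = length ts"
      and e: "\<And>i. i < length ts \<Longrightarrow> osubst (ts ! i) f = Some (us ! i)" by auto
    have "\<forall>u\<in>set us. in_T rk D W u"
    proof
      fix u assume "u \<in> set us"
      then obtain i where i: "i < length us" "u = us ! i" by (metis in_set_conv_nth)
      then have "ts ! i \<in> set ts" using len by simp
      moreover have "in_T rk D Z (ts ! i)" using Node.prems(1) Sym \<open>ts ! i \<in> set ts\<close> by auto
      moreover have "osubst (ts ! i) f = Some u" using e i len by simp
      ultimately show "in_T rk D W u" using Node.IH[OF \<open>ts ! i \<in> set ts\<close>] Node.prems(2) by blast
    qed
    then show ?thesis using us Sym Node.prems(1) len by auto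
  next
    case (Var z)
    then show ?thesis using Node.prems by auto
  next
    case Bot
    then show ?thesis using Node.prems by auto
  qed
qed

lemma run_in_ctx:
  assumes "is_dtla rkS S rkD D M" "p \<in> lastates M"
  shows "in_Tb rkS S {} C \<Longrightarrow> run M p C \<in> lastates M"
proof (induction C)
  case (Node l ts)
  show ?case
  proof (cases l)
    case (Sym d)
    with Node have "set (map (run M p) ts) \<subseteq> lastates M" "length (map (run M p) ts) = rkS d" "d \<in> S" by auto
    then show ?thesis using assms Sym unfolding is_dtla_def by (simp del: set_map length_map)
  qed (use Node assms in auto)
qed

lemma qrun_in_T:
  assumes M: "is_dtla rkS S rkD D M"
  shows "in_Tb rkS S {} C \<Longrightarrow> q \<in> states M \<Longrightarrow>
    qrun M p (\<lambda>q. Some (Node (Var (q, p)) [])) C q = Some t \<Longrightarrow> in_T rkD D (states M \<times> {p}) t"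
proof (induction C arbitrary: q t)
  case (Node l ts)
  let ?h = "\<lambda>q. Some (Node (Var (q, p)) []) :: ('b, 'c \<times> 'd) sym tree option"
  show ?case
  proof (cases l)
    case (Sym a)
    show ?thesis
    proof (cases "rhs M q a (map (run M p) ts)")
      case None
      then show ?thesis using Node.prems Sym by (simp add: Let_def)
    next
      case (Some r)
      have len: "length ts = rkS a" using Node.prems Sym by auto
      have r: "in_T rkD D (states M \<times> {1..rkS a}) r" using M Some unfolding is_dtla_def by blast
      have os: "osubst r (\<lambda>(q', i). if 0 < i \<and> i \<le> length ts then (map (qrun M p ?h) ts ! (i - 1)) q' else None) = Some t"
        using Node.prems Sym Some by (simp add: Let_def)
      show ?thesis
      proof (rule osubst_in_T[OF r _ os])
        fix z u assume z: "z \<in> states M \<times> {1..rkS a}"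
          and fz: "(\<lambda>(q', i). if 0 < i \<and> i \<le> length ts then (map (qrun M p ?h) ts ! (i - 1)) q' else None) z = Some u"
        obtain q' i where zz: "z = (q', i)" by (cases z)
        have i: "0 < i" "i \<le> length ts" "q' \<in> states M" using z zz len by auto
        then have mem: "ts ! (i - 1) \<in> set ts" by (intro nth_mem) linarith
        have "qrun M p ?h (ts ! (i - 1)) q' = Some u" using fz zz i by simp
        moreover have "in_Tb rkS S {} (ts ! (i - 1))" using Node.prems(1) Sym mem by auto
        ultimately show "in_T rkD D (states M \<times> {p}) u" using Node.IH[OF mem] i by blast
      qed
    qed
  qed (use Node.prems in auto)
qed

lemma cout_in_T:
  assumes M: "is_dtla rkS S rkD D M" and p: "p \<in> lastates M" and C: "in_Tb rkS S {} C"
    and co: "cout M C p = Some t"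
  shows "in_T rkD D (states M \<times> {p}) t"
proof -
  have "run M p C \<in> lastates M" by (rule run_in_ctx[OF M p C])
  then have ax: "in_T rkD D (states M) (axiom M (run M p C))" using M unfolding is_dtla_def by blast
  show ?thesis
    using osubst_in_T[OF ax _ co[unfolded cout_def]] qrun_in_T[OF M C] by blast
qed

lemma subt_in_T: "in_T rk D Z t \<Longrightarrow> subt t v = Some w \<Longrightarrow> in_T rk D Z w"
proof (induction v arbitrary: t)
  case Nil then show ?case by simp
next
  case (Cons i v)
  obtain l ts where t: "t = Node l ts" by (cases t)
  have i: "i < length ts" and s: "subt (ts ! i) v = Some w" using Cons.prems t by (auto split: if_splits)
  have "in_T rk D Z (ts ! i)" using Cons.prems(1) t i by (cases l) auto
  then show ?case using Cons.IH s by blast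
qed

lemma subt_tsubst_var:
  "in_T rk D Z t \<Longrightarrow> subt t v = Some (Node (Var z) ys) \<Longrightarrow> subt (tsubst t f) v = Some (f z)"
proof (induction v arbitrary: t)
  case Nil then show ?case by auto
next
  case (Cons i v)
  obtain l ts where t: "t = Node l ts" by (cases t)
  have i: "i < length ts" and s: "subt (ts ! i) v = Some (Node (Var z) ys)" using Cons.prems t by (auto split: if_splits)
  show ?case
  proof (cases l)
    case (Sym d)
    then have "in_T rk D Z (ts ! i)" using Cons.prems(1) t i by auto
    then show ?thesis using Cons.IH s t Sym i by auto
  qed (use Cons.prems t i in auto)
qed

lemma subt_tsubst_bot:
  "in_T rk D Z t \<Longrightarrow> subt (tsubst t G) v = Some w \<Longrightarrow> root w = Bot \<Longrightarrow>
   \<exists>v1 v2 z ys. v = v1 @ v2 \<and> subt t v1 = Some (Node (Var z) ys) \<and> subt (G z) v2 = Some w"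
proof (induction v arbitrary: t)
  case Nil
  obtain l ts where t: "t = Node l ts" by (cases t)
  show ?case
  proof (cases l)
    case (Sym d) then show ?thesis using Nil t by auto
  next
    case (Var z) then show ?thesis using Nil t by auto
  next
    case Bot then show ?thesis using Nil t by auto
  qed
next
  case (Cons i v)
  obtain l ts where t: "t = Node l ts" by (cases t)
  show ?case
  proof (cases l)
    case (Sym d)
    have i: "i < length ts" and s: "subt (tsubst (ts ! i) G) v = Some w" using Cons.prems t Sym by (auto split: if_splits)
    have "in_T rk D Z (ts ! i)" using Cons.prems(1) t i Sym by auto
    from Cons.IH[OF this s Cons.prems(3)] obtain v1 v2 z ys where
      "v = v1 @ v2" "subt (ts ! i) v1 = Some (Node (Var z) ys)" "subt (G z) v2 = Some w" by blast
    then show ?thesis using t i by (intro exI[of _ "i # v1"] exI[of _ v2]) auto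
  next
    case (Var z)
    then show ?thesis using Cons.prems t by (intro exI[of _ "[]"] exI[of _ "i # v"] exI[of _ z] exI[of _ ts]) auto
  next
    case Bot then show ?thesis using Cons.prems t by auto
  qed
qed

lemma subt_osubst:
  "in_T rk D Z t \<Longrightarrow> osubst t f = Some u \<Longrightarrow> subt t v = Some w \<Longrightarrow> subt u v = osubst w f"
proof (induction v arbitrary: t u)
  case Nil then show ?case by auto
next
  case (Cons i v)
  obtain l ts where t: "t = Node l ts" by (cases t)
  have i: "i < length ts" and s: "subt (ts ! i) v = Some w" using Cons.prems t by (auto split: if_splits)
  show ?case
  proof (cases l)
    case (Sym d)
    with Cons.prems t obtain us where us: "those (map (\<lambda>t. osubst t f) ts) = Some us" "u = Node (Sym d) us"
      by auto
    from those_SomeD[OF us(1)] i have len: "length us = length ts"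
      and e: "osubst (ts ! i) f = Some (us ! i)" by auto
    have "in_T rk D Z (ts ! i)" using Cons.prems(1) t i Sym by auto
    from Cons.IH[OF this e s] show ?thesis using us len i by simp
  qed (use Cons.prems t i in auto)
qed

lemma set_tree_pos: "l \<in> set_tree t \<Longrightarrow> \<exists>v ys. subt t v = Some (Node l ys)"
proof (induction t)
  case (Node l' ts)
  show ?case
  proof (cases "l = l'")
    case True then show ?thesis by (intro exI[of _ "[]"] exI[of _ ts]) auto
  next
    case False
    then obtain t where t: "t \<in> set ts" "l \<in> set_tree t" using Node.prems by auto
    then obtain i where i: "i < length ts" "t = ts ! i" by (metis in_set_conv_nth)
    from Node.IH[OF t] obtain v ys where "subt t v = Some (Node l ys)" by blast
    then show ?thesis using i by (intro exI[of _ "i # v"]) auto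
  qed
qed

lemma glb_tsubst: "glb (tsubst t f) (tsubst t g) = tsubst t (\<lambda>z. glb (f z) (g z))"
proof (induction t)
  case (Node l ts)
  show ?case
  proof (cases l)
    case (Sym d)
    have "map (\<lambda>i. glb (map (\<lambda>t. tsubst t f) ts ! i) (map (\<lambda>t. tsubst t g) ts ! i)) [0..<length ts]
        = map (\<lambda>t. tsubst t (\<lambda>z. glb (f z) (g z))) ts"
      by (rule nth_equalityI) (auto simp: Node.IH)
    then show ?thesis using Sym by simp
  qed auto
qed

lemma fold_glb_tsubst:
  "fold glb (map (\<lambda>p. tsubst t (f p)) ps) (tsubst t F0) = tsubst t (\<lambda>z. fold glb (map (\<lambda>p. f p z) ps) (F0 z))"
proof (induction ps arbitrary: F0)
  case Nil then show ?case by simp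
next
  case (Cons a ps)
  show ?case using Cons.IH[of "\<lambda>z. glb (f a z) (F0 z)"] by (simp add: glb_tsubst)
qed

lemma glb_bot: "glb x (Node Bot []) = Node Bot []"
  by (cases x) auto

lemma fold_glb_bot: "fold glb ts (Node Bot []) = Node Bot []"
  by (induction ts) (auto simp: glb_bot)

lemma glb_root: "root (glb a b) \<noteq> Bot \<Longrightarrow> root (glb a b) = root a \<and> root b = root a"
  by (cases a; cases b) (auto split: if_splits)

lemma glb_root2: "root (glb a b) = Bot \<Longrightarrow> root b \<noteq> Bot \<Longrightarrow> glb a b = Node Bot []"
  by (cases a; cases b) (auto split: if_splits)

lemma fold_glb_root:
  "root (fold glb ts t) \<noteq> Bot \<Longrightarrow> root (fold glb ts t) = root t \<and> (\<forall>u\<in>set ts. root u = root t)"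
proof (induction ts arbitrary: t)
  case Nil then show ?case by simp
next
  case (Cons u ts)
  from Cons.IH[of "glb u t"] Cons.prems have ih: "root (fold glb ts (glb u t)) = root (glb u t)"
    "\<forall>x\<in>set ts. root x = root (glb u t)" by auto
  then have "root (glb u t) \<noteq> Bot" using Cons.prems by simp
  then have g: "root (glb u t) = root u" "root t = root u" using glb_root by blast+
  have A: "root (fold glb (u # ts) t) = root t" using ih g by simp
  have B: "\<forall>x\<in>set (u # ts). root x = root t" using ih(2) g by simp
  from A B show ?case by blast
qed

lemma fold_glb_root2:
  "root t \<noteq> Bot \<Longrightarrow> root (fold glb ts t) = Bot \<Longrightarrow> fold glb ts t = Node Bot []"
proof (induction ts arbitrary: t)
  case Nil then show ?case by simp
next
  case (Cons u ts)
  show ?case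
  proof (cases "root (glb u t) = Bot")
    case True
    then have "glb u t = Node Bot []" using glb_root2 Cons.prems by blast
    then show ?thesis by (simp add: fold_glb_bot)
  next
    case False
    then have "root (glb u t) = root u" "root t = root u" using glb_root by blast+
    then show ?thesis using Cons.IH[of "glb u t"] Cons.prems by simp
  qed
qed


lemma in_T_root:
  assumes "in_T rk D Z t"
  shows "root t \<noteq> Bot" "root t = Var z \<Longrightarrow> z \<in> Z" "root t = Sym d \<Longrightarrow> d \<in> D"
  using assms by (cases t; case_tac x1; auto)+

theorem mainTheorem5:
  fixes rkS :: "'a \<Rightarrow> nat" and S :: "'a set" and rkD :: "'d \<Rightarrow> nat" and D :: "'d set"
    and M :: "('a, 'd, 'q1, 'p1) dtla" and N :: "('a, 'd, 'q2, 'p2) dtla"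
    and ps :: "'p1 list" and pN :: 'p2
    and \<phi> :: "'q2 \<Rightarrow> 'p1 \<Rightarrow> ('d, 'q1 \<times> 'p1) sym tree"
  assumes "finite S" and "finite D"
    and "is_dtla rkS S rkD D M" and "is_dtla rkS S rkD D N"
    and "canonical rkS S rkD D M" and "canonical rkS S rkD D N"
    and "equivalent rkS S M N"
    and "is_dtpla M" and "is_dtop N" and "lastates N = {pN}"
    and "distinct ps" and "set ps = lastates M"
    and "is_aheadness rkS S M N pN \<phi>"
  shows "bij_betw (\<lambda>q. map (\<phi> q) ps) (states N) (diftup rkS S M ps)"
proof -
  note Mdt = assms(3) and Ndt = assms(4)
  have totN: "total rkS S N" and earlyN: "earliest rkS S D N"
    and reachN: "\<forall>q\<in>states N. reachable rkS S N q"
    and distN: "\<forall>q\<in>states N. \<forall>q'\<in>states N. q \<noteq> q' \<longrightarrow> (\<exists>s. in_T rkS S {} s \<and> qsem N q s \<noteq> qsem N q' s)"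
    using assms(6) unfolding canonical_def by auto
  have equiv: "\<And>s. in_T rkS S {} s \<Longrightarrow> msem M s = msem N s" using assms(7) unfolding equivalent_def by auto
  have pN: "pN \<in> lastates N" using assms(10) by simp
  have ahead: "\<And>C p. is_context rkS S C \<Longrightarrow> p \<in> lastates M \<Longrightarrow>
      cout M C p = map_option (\<lambda>t. tsubst t (\<lambda>(q, _). \<phi> q p)) (cout N C pN)"
    using assms(13) unfolding is_aheadness_def by auto
  have ctxT: "\<And>C. is_context rkS S C \<Longrightarrow> in_Tb rkS S {} C" unfolding is_context_def by auto
  have "card (lastates M) \<ge> 2" using assms(8) unfolding is_dtpla_def .
  then have "card (set ps) \<ge> 2" using assms(12) by simp
  then have "\<not> (\<forall>a\<in>set ps. \<forall>b\<in>set ps. a = b)"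
    using card_le_Suc0_iff_eq[of "set ps"] by auto
  then obtain p1 p2 where p12: "p1 \<in> set ps" "p2 \<in> set ps" "p1 \<noteq> p2" by blast
  obtain p0 ps' where ps: "ps = p0 # ps'" using p12 by (cases ps) auto
  have psM: "\<And>p. p \<in> set ps \<longleftrightarrow> p \<in> lastates M" using assms(12) by auto
  define G where "G q = fold glb (map (\<phi> q) ps') (\<phi> q p0)" for q

  have key: "q \<in> states N \<and>
      (\<forall>p\<in>set ps. in_T rkD D (states M \<times> {p}) (\<phi> q p)) \<and>
      (\<forall>s. in_T rkS S {} s \<longrightarrow> qsem N q s = osubst (\<phi> q (run M undefined s)) (\<lambda>(x, _). qsem M x s)) \<and>
      G q = Node Bot []"
    if C: "is_context rkS S C" and tN: "cout N C pN = Some tN"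
      and v: "subt tN v = Some (Node (Var (q, pN)) ys)" for C tN v q ys
  proof -
    have CT: "in_Tb rkS S {} C" using ctxT[OF C] .
    have tNT: "in_T rkD D (states N \<times> {pN}) tN" by (rule cout_in_T[OF Ndt pN CT tN])
    have "in_T rkD D (states N \<times> {pN}) (Node (Var (q, pN)) ys)" by (rule subt_in_T[OF tNT v])
    then have qN: "q \<in> states N" by simp
    have coutM: "cout M C p = Some (tsubst tN (\<lambda>(q, _). \<phi> q p))" if "p \<in> lastates M" for p
      using ahead[OF C that] tN by simp
    have subM: "subt (tsubst tN (\<lambda>(q, _). \<phi> q p)) v = Some (\<phi> q p)" for p
      using subt_tsubst_var[OF tNT v, of "\<lambda>(q, _). \<phi> q p"] by simp
    have phiT: "in_T rkD D (states M \<times> {p}) (\<phi> q p)" if "p \<in> lastates M" for p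
    proof -
      have "in_T rkD D (states M \<times> {p}) (tsubst tN (\<lambda>(q, _). \<phi> q p))"
        by (rule cout_in_T[OF Mdt that CT coutM[OF that]])
      then show ?thesis using subt_in_T subM by blast
    qed
    have qs: "qsem N q s = osubst (\<phi> q (run M undefined s)) (\<lambda>(x, _). qsem M x s)"
      if s: "in_T rkS S {} s" for s
    proof -
      let ?p = "run M undefined s"
      have pM: "?p \<in> lastates M" by (rule run_in[OF Mdt s])
      have "run N undefined s \<in> lastates N" by (rule run_in[OF Ndt s])
      then have pNs: "run N undefined s = pN" using assms(10) by simp
      have plT: "in_T rkS S {} (plug C s)" by (rule plug_in_T[OF CT s])
      have eM: "osubst (tsubst tN (\<lambda>(q, _). \<phi> q ?p)) (\<lambda>(x, _). qsem M x s) = msem M (plug C s)"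
        using cout_plug[OF CT s, of M] coutM[OF pM] by simp
      have eN: "osubst tN (\<lambda>(x, _). qsem N x s) = msem N (plug C s)"
        using cout_plug[OF CT s, of N] tN pNs by simp
      obtain u where u: "msem N (plug C s) = Some u" using totN plT unfolding total_def by blast
      have TM: "in_T rkD D (states M \<times> {?p}) (tsubst tN (\<lambda>(q, _). \<phi> q ?p))"
        by (rule cout_in_T[OF Mdt pM CT coutM[OF pM]])
      have "subt u v = osubst (Node (Var (q, pN)) ys) (\<lambda>(x, _). qsem N x s)"
        using subt_osubst[OF tNT _ v, of "\<lambda>(x, _). qsem N x s" u] eN u by simp
      moreover have "subt u v = osubst (\<phi> q ?p) (\<lambda>(x, _). qsem M x s)"
        using subt_osubst[OF TM _ subM, of "\<lambda>(x, _). qsem M x s" u] eM u equiv[OF plT] by simp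
      ultimately show ?thesis by simp
    qed
    have G: "G q = Node Bot []"
    proof -
      have p0M: "p0 \<in> lastates M" using psM[of p0] ps by simp
      have T0: "in_T rkD D (states M \<times> {p0}) (\<phi> q p0)" using phiT[OF p0M] .
      have r0: "root (\<phi> q p0) \<noteq> Bot" using in_T_root[OF T0] by simp
      have rootG: "root (G q) = Bot"
      proof (rule ccontr)
        assume "root (G q) \<noteq> Bot"
        then have allr: "\<forall>p\<in>set ps. root (\<phi> q p) = root (\<phi> q p0)"
          using fold_glb_root[of "map (\<phi> q) ps'" "\<phi> q p0"] ps unfolding G_def by auto
        show False
        proof (cases "root (\<phi> q p0)")
          case (Var z)
          have "z \<in> states M \<times> {p}" if "p \<in> set ps" for p
          proof -
            have T: "in_T rkD D (states M \<times> {p}) (\<phi> q p)" using phiT psM that by blast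
            have "root (\<phi> q p) = Var z" using allr that Var by simp
            then show ?thesis using in_T_root(2)[OF T] by simp
          qed
          then have "z \<in> states M \<times> {p1}" "z \<in> states M \<times> {p2}" using p12 by auto
          then show False using p12(3) by auto
        next
          case Bot then show False using r0 by simp
        next
          case (Sym d)
          have dD: "d \<in> D" using in_T_root(3)[OF T0] Sym by simp
          have "\<forall>s. in_T rkS S {} s \<and> qsem N q s \<noteq> None \<longrightarrow> map_option root (qsem N q s) = Some (Sym d)"
          proof (intro allI impI)
            fix s assume s: "in_T rkS S {} s \<and> qsem N q s \<noteq> None"
            let ?p = "run M undefined s"
            have "?p \<in> set ps" using run_in[OF Mdt] s psM by blast
            then have rp: "root (\<phi> q ?p) = Sym d" using allr Sym by simp
            obtain ts where e: "\<phi> q ?p = Node (Sym d) ts" using rp by (cases "\<phi> q ?p") auto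
            show "map_option root (qsem N q s) = Some (Sym d)"
              using qs[of s] s e by auto
          qed
          then show False using earlyN qN dD unfolding earliest_def by blast
        qed
      qed
      show ?thesis using fold_glb_root2[OF r0] rootG unfolding G_def by simp
    qed
    show ?thesis using qN phiT psM qs G by blast
  qed

  have reach: "\<exists>C tN v ys. is_context rkS S C \<and> cout N C pN = Some tN \<and> subt tN v = Some (Node (Var (q, pN)) ys)"
    if qN: "q \<in> states N" for q
  proof -
    obtain C p t where "is_context rkS S C" "p \<in> lastates N" "cout N C p = Some t" "Var (q, p) \<in> set_tree t"
      using reachN qN unfolding reachable_def by blast
    moreover then have "p = pN" using assms(10) by simp
    ultimately show ?thesis using set_tree_pos by metis
  qed

  have glbT: "glb_list (map (\<lambda>p. tsubst tN (\<lambda>(q, _). \<phi> q p)) ps)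
      = tsubst tN (\<lambda>z. case z of (q, _) \<Rightarrow> G q)" for tN
    using fold_glb_tsubst[of tN "\<lambda>p. (\<lambda>(q, _). \<phi> q p)" ps' "\<lambda>(q, _). \<phi> q p0"] ps
    by (simp add: G_def split_def)

  show ?thesis
  proof (rule bij_betw_imageI)
    show "inj_on (\<lambda>q. map (\<phi> q) ps) (states N)"
    proof (rule inj_onI)
      fix q q' assume q: "q \<in> states N" and q': "q' \<in> states N" and eq: "map (\<phi> q) ps = map (\<phi> q') ps"
      show "q = q'"
      proof (rule ccontr)
        assume "q \<noteq> q'"
        then obtain s where s: "in_T rkS S {} s" "qsem N q s \<noteq> qsem N q' s" using distN q q' by blast
        obtain C tN v ys where "is_context rkS S C" "cout N C pN = Some tN" "subt tN v = Some (Node (Var (q, pN)) ys)"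
          using reach[OF q] by blast
        from key[OF this] have k: "qsem N q s = osubst (\<phi> q (run M undefined s)) (\<lambda>(x, _). qsem M x s)" using s by blast
        obtain C' tN' v' ys' where "is_context rkS S C'" "cout N C' pN = Some tN'" "subt tN' v' = Some (Node (Var (q', pN)) ys')"
          using reach[OF q'] by blast
        from key[OF this] have k': "qsem N q' s = osubst (\<phi> q' (run M undefined s)) (\<lambda>(x, _). qsem M x s)" using s by blast
        have "run M undefined s \<in> set ps" using run_in[OF Mdt s(1)] psM by blast
        then have "\<phi> q (run M undefined s) = \<phi> q' (run M undefined s)" using eq by (simp add: map_eq_conv)
        then show False using k k' s by simp
      qed
    qed
  next
    show "(\<lambda>q. map (\<phi> q) ps) ` states N = diftup rkS S M ps"
    proof
      show "(\<lambda>q. map (\<phi> q) ps) ` states N \<subseteq> diftup rkS S M ps"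
      proof
        fix x assume "x \<in> (\<lambda>q. map (\<phi> q) ps) ` states N"
        then obtain q where q: "q \<in> states N" and x: "x = map (\<phi> q) ps" by blast
        obtain C tN v ys where C: "is_context rkS S C" and tN: "cout N C pN = Some tN"
          and v: "subt tN v = Some (Node (Var (q, pN)) ys)"
          using reach[OF q] by blast
        have k: "G q = Node Bot []" using key[OF C tN v] by blast
        have CT: "in_Tb rkS S {} C" using ctxT[OF C] .
        have tNT: "in_T rkD D (states N \<times> {pN}) tN" by (rule cout_in_T[OF Ndt pN CT tN])
        define ts where "ts = map (\<lambda>p. tsubst tN (\<lambda>(q, _). \<phi> q p)) ps"
        have "map (cout M C) ps = map Some ts"
          unfolding ts_def using ahead[OF C] tN psM by auto
        then have th: "those (map (cout M C) ps) = Some ts" by (simp add: those_map_Some)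
        have "subt (glb_list ts) v = Some (G q)"
          unfolding ts_def glbT using subt_tsubst_var[OF tNT v, of "\<lambda>z. case z of (q, _) \<Rightarrow> G q"] by simp
        then have bp: "v \<in> botpos (glb_list ts)" using k unfolding botpos_def by simp
        have "map (\<lambda>t. the (subt t v)) ts = x"
        proof -
          have "the (subt (tsubst tN (\<lambda>(q, _). \<phi> q p)) v) = \<phi> q p" for p
            using subt_tsubst_var[OF tNT v, of "\<lambda>(q, _). \<phi> q p"] by simp
          then show ?thesis unfolding ts_def x by simp
        qed
        then show "x \<in> diftup rkS S M ps" unfolding diftup_def using C th bp by blast
      qed
    next
      show "diftup rkS S M ps \<subseteq> (\<lambda>q. map (\<phi> q) ps) ` states N"
      proof
        fix x assume "x \<in> diftup rkS S M ps"
        then obtain C v ts where x: "x = map (\<lambda>t. the (subt t v)) ts" and C: "is_context rkS S C"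
          and th: "those (map (cout M C) ps) = Some ts" and bp: "v \<in> botpos (glb_list ts)"
          unfolding diftup_def by blast
        have p0M: "p0 \<in> lastates M" using psM[of p0] ps by simp
        have "cout M C p0 \<noteq> None" using those_SomeD[OF th] ps by fastforce
        then obtain tN where tN: "cout N C pN = Some tN" using ahead[OF C p0M] by auto
        have CT: "in_Tb rkS S {} C" using ctxT[OF C] .
        have tNT: "in_T rkD D (states N \<times> {pN}) tN" by (rule cout_in_T[OF Ndt pN CT tN])
        have "map (cout M C) ps = map Some (map (\<lambda>p. tsubst tN (\<lambda>(q, _). \<phi> q p)) ps)"
          using ahead[OF C] tN psM by auto
        then have ts: "ts = map (\<lambda>p. tsubst tN (\<lambda>(q, _). \<phi> q p)) ps"
          using th by (simp only: those_map_Some) simp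
        from bp obtain w where w: "subt (tsubst tN (\<lambda>z. case z of (q, _) \<Rightarrow> G q)) v = Some w" "root w = Bot"
          unfolding botpos_def ts glbT by auto
        from subt_tsubst_bot[OF tNT w] obtain v1 v2 z ys where
          vv: "v = v1 @ v2" and v1: "subt tN v1 = Some (Node (Var z) ys)"
          and v2: "subt (case z of (q, _) \<Rightarrow> G q) v2 = Some w" by blast
        have "in_T rkD D (states N \<times> {pN}) (Node (Var z) ys)" by (rule subt_in_T[OF tNT v1])
        then obtain q where z: "z = (q, pN)" by auto
        have k: "q \<in> states N" "G q = Node Bot []" using key[OF C tN v1[unfolded z]] by blast+
        have "v2 = []" using v2 z k by (cases v2) auto
        then have "x = map (\<phi> q) ps"
        proof -
          have "the (subt (tsubst tN (\<lambda>(q, _). \<phi> q p)) v1) = \<phi> q p" for p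
            using subt_tsubst_var[OF tNT v1[unfolded z], of "\<lambda>(q, _). \<phi> q p"] by simp
          then show ?thesis unfolding x ts vv \<open>v2 = []\<close> by simp
        qed
        then show "x \<in> (\<lambda>q. map (\<phi> q) ps) ` states N" using k by blast
      qed
    qed
  qed
qed

end
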